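(* Let $\alpha,\sigma>0$. For every $t\ge0$, the Koopman operator $K^t$ of the Ornstein–Uhlenbeck process maps $\mathbb H_\sigma$ into itself, and $$ \|K^t\|_{\mathbb H_\sigma\to\mathbb H_\sigma}\le e^{\frac{\alpha}{2}t}. $$
   Context: The Ornstein–Uhlenbeck process on $\mathbb R$ is the solution of $dX_t=-\alpha X_t\,dt+dW_t$ with $\alpha>0$. Its invariant measure is $d\mu(x)=\sqrt{\alpha/\pi}\,e^{-\alpha x^2}dx$ and its transition kernel is $\rho_t(x,dy)=\sqrt{c_t/\pi}\exp[-c_t(y-e^{-\alpha t}x)^2]\,dy$ with $c_t=\alpha/(1-e^{-2\alpha t})$ for $t>0$. The Koopman operator is $(K^t\psi)(x)=\int\psi(y)\rho_t(x,dy)$ (with $K^0=I$), acting on $L^2_\mu(\mathbb R)$. $\mathbb H_\sigma$ denotes the RKHS of the Gaussian kernel $k^\sigma(x,y)=\exp(-(x-y)^2/\sigma^2)$ on $\mathbb R$, which is continuously embedded in $L^2_\mu(\mathbb R)$. *)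

theory Defs
  imports "HOL-Analysis.Analysis"
begin

definition gauss_kernel :: "real \<Rightarrow> real \<Rightarrow> real \<Rightarrow> real" where
  "gauss_kernel \<sigma> x y = exp (- ((x - y)^2) / \<sigma>^2)"

text \<open>A finite kernel combination \<open>\<Sum>i a_i k(p_i,\<cdot>)\<close> is represented by a list of
  pairs (point, coefficient).\<close>

definition kcomb_eval :: "real \<Rightarrow> (real \<times> real) list \<Rightarrow> real \<Rightarrow> real" where
  "kcomb_eval \<sigma> c x = (\<Sum>(p,a)\<leftarrow>c. a * gauss_kernel \<sigma> p x)"

definition kcomb_sqnorm :: "real \<Rightarrow> (real \<times> real) list \<Rightarrow> real" where
  "kcomb_sqnorm \<sigma> c = (\<Sum>(p,a)\<leftarrow>c. \<Sum>(q,b)\<leftarrow>c. a * b * gauss_kernel \<sigma> p q)"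

definition kcomb_diff :: "(real \<times> real) list \<Rightarrow> (real \<times> real) list \<Rightarrow> (real \<times> real) list" where
  "kcomb_diff c d = c @ map (\<lambda>(q,b). (q, - b)) d"

definition rkhs_approx :: "real \<Rightarrow> (real \<Rightarrow> real) \<Rightarrow> (nat \<Rightarrow> (real \<times> real) list) \<Rightarrow> bool" where
  "rkhs_approx \<sigma> f g \<longleftrightarrow>
     (\<forall>\<epsilon>>0. \<exists>N. \<forall>m\<ge>N. \<forall>n\<ge>N. sqrt (kcomb_sqnorm \<sigma> (kcomb_diff (g m) (g n))) < \<epsilon>) \<and>
     (\<forall>x. (\<lambda>n. kcomb_eval \<sigma> (g n) x) \<longlonglongrightarrow> f x)"

definition gauss_rkhs :: "real \<Rightarrow> (real \<Rightarrow> real) set" where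
  "gauss_rkhs \<sigma> = {f. \<exists>g. rkhs_approx \<sigma> f g}"

definition gauss_rkhs_norm :: "real \<Rightarrow> (real \<Rightarrow> real) \<Rightarrow> real" where
  "gauss_rkhs_norm \<sigma> f =
     Inf {L. \<exists>g. rkhs_approx \<sigma> f g \<and> (\<lambda>n. sqrt (kcomb_sqnorm \<sigma> (g n))) \<longlonglongrightarrow> L}"

definition ou_c :: "real \<Rightarrow> real \<Rightarrow> real" where
  "ou_c \<alpha> t = \<alpha> / (1 - exp (- 2 * \<alpha> * t))"

definition ou_density :: "real \<Rightarrow> real \<Rightarrow> real \<Rightarrow> real \<Rightarrow> real" where
  "ou_density \<alpha> t x y = sqrt (ou_c \<alpha> t / pi) * exp (- ou_c \<alpha> t * (y - exp (- \<alpha> * t) * x)^2)"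

definition koopman :: "real \<Rightarrow> real \<Rightarrow> (real \<Rightarrow> real) \<Rightarrow> (real \<Rightarrow> real)" where
  "koopman \<alpha> t \<psi> = (if t = 0 then \<psi> else (\<lambda>x. integral\<^sup>L lborel (\<lambda>y. \<psi> y * ou_density \<alpha> t x y)))"

end

theory Submission
  imports Defs "HOL-Probability.Probability"
begin

definition gs :: "real \<Rightarrow> real \<Rightarrow> real" where
  "gs v u = exp (- (u^2) / v)"

lemma gs_pos: "gs v u > 0" by (simp add: gs_def)
lemma gs_sym: "gs v (a - b) = gs v (b - a)" by (simp add: gs_def power2_commute)

lemma gauss_hbi:
  fixes k m :: real
  assumes k: "k > 0"
  shows "has_bochner_integral lborel (\<lambda>y. exp (- k * (y - m)^2)) (sqrt (pi / k))"
proof -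
  define s where "s = 1 / sqrt (2 * k)"
  have s: "s > 0" using k by (simp add: s_def)
  have s2: "s^2 = 1 / (2*k)" using k by (simp add: s_def power_divide)
  have "has_bochner_integral lborel (\<lambda>x. normal_density m s x * (x - m) ^ (2 * 0))
     (fact (2 * 0) / ((2 / s\<^sup>2)^0 * fact 0))"
    by (rule normal_moment_even[OF s])
  then have h: "has_bochner_integral lborel (\<lambda>x. normal_density m s x) 1" by simp
  have eq: "(\<lambda>y. exp (- k * (y - m)^2)) = (\<lambda>y. sqrt (pi / k) * normal_density m s y)"
  proof
    fix y
    have "sqrt (2 * pi * s\<^sup>2) = sqrt (pi / k)" using s2 k by (simp add: field_simps)
    moreover have "2 * s\<^sup>2 = 1 / k" using s2 k by (simp add: field_simps)
    then have "- (y - m)\<^sup>2 / (2 * s\<^sup>2) = - k * (y - m)^2" using k by simp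
    moreover have "sqrt (pi / k) > 0" using k by simp
    ultimately show "exp (- k * (y - m)^2) = sqrt (pi / k) * normal_density m s y"
      unfolding normal_density_def using k by simp
  qed
  show ?thesis unfolding eq using has_bochner_integral_mult_right[OF h, of "sqrt (pi/k)"] by simp
qed

lemma gauss_prod_hbi:
  fixes v w u u' :: real
  assumes v: "v > 0" and w: "w > 0"
  shows "has_bochner_integral lborel (\<lambda>y. gs v (y - u) * gs w (y - u'))
           (sqrt (pi * v * w / (v + w)) * gs (v + w) (u - u'))"
proof -
  define k where "k = (v + w) / (v * w)"
  define m where "m = (w * u + v * u') / (v + w)"
  have k: "k > 0" using v w by (simp add: k_def)
  have eq: "gs v (y - u) * gs w (y - u') = gs (v + w) (u - u') * exp (- k * (y - m)^2)" for y
  proof -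
    have poly: "w * (v + w) * (y - u)^2 + v * (v + w) * (y - u')^2 = v * w * (u - u')^2 + ((v + w) * y - w * u - v * u')^2"
      by (simp add: power2_eq_square algebra_simps)
    have km: "k * (y - m)^2 = ((v + w) * y - w * u - v * u')^2 / (v * w * (v + w))"
    proof -
      have "y - m = ((v + w) * y - w * u - v * u') / (v + w)" using v w by (simp add: m_def field_simps)
      then have "k * (y - m)^2 = (v + w) / (v * w) * (((v + w) * y - w * u - v * u')^2 / (v + w)^2)"
        by (simp add: k_def power_divide)
      also have "\<dots> = ((v + w) * y - w * u - v * u')^2 / (v * w * (v + w))"
        using v w by (simp add: power2_eq_square)
      finally show ?thesis .
    qed
    have "(y - u)^2 / v + (y - u')^2 / w = (u - u')^2 / (v + w) + k * (y - m)^2"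
    proof -
      have d: "v * w * (v + w) > 0" using v w by simp
      have l: "(y - u)^2 / v + (y - u')^2 / w = (w * (v + w) * (y - u)^2 + v * (v + w) * (y - u')^2) / (v * w * (v + w))"
      proof -
        have "(w * (v + w) * (y - u)^2 + v * (v + w) * (y - u')^2) / (v * w * (v + w))
           = ((v + w) * (w * (y - u)^2 + v * (y - u')^2)) / ((v + w) * (v * w))"
          by (simp add: algebra_simps)
        also have "\<dots> = (w * (y - u)^2 + v * (y - u')^2) / (v * w)"
          using v w by (intro nonzero_mult_divide_mult_cancel_left) simp
        also have "\<dots> = (y - u)^2 / v + (y - u')^2 / w" using v w by (simp add: field_simps)
        finally show ?thesis by simp
      qed
      have r: "(u - u')^2 / (v + w) = (v * w * (u - u')^2) / (v * w * (v + w))"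
        using v w by (metis d less_irrefl mult_eq_0_iff nonzero_mult_divide_mult_cancel_left)
      show ?thesis unfolding l r km poly by (simp add: add_divide_distrib)
    qed
    then have "- ((y - u)^2) / v + - ((y - u')^2) / w = - ((u - u')^2) / (v + w) + - k * (y - m)^2"
      by (simp add: field_simps)
    then show ?thesis unfolding gs_def by (simp add: exp_add[symmetric])
  qed
  have "sqrt (pi / k) = sqrt (pi * v * w / (v + w))" using v w by (simp add: k_def field_simps)
  then show ?thesis
    using has_bochner_integral_mult_right[OF gauss_hbi[OF k, of m], of "gs (v + w) (u - u')"]
    by (simp add: eq mult.commute)
qed

lemma hbi_mono:
  fixes f g :: "'a \<Rightarrow> real"
  assumes "has_bochner_integral M f I" "has_bochner_integral M g J" "\<And>x. f x \<le> g x"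
  shows "I \<le> J"
proof -
  have "integral\<^sup>L M f \<le> integral\<^sup>L M g"
    using assms(3) integrable.intros[OF assms(1)] integrable.intros[OF assms(2)]
    by (intro integral_mono) auto
  then show ?thesis using assms by (simp add: has_bochner_integral_integral_eq)
qed

lemma hbi_unique:
  "has_bochner_integral M f I \<Longrightarrow> has_bochner_integral M f J \<Longrightarrow> I = (J::real)"
  by (metis has_bochner_integral_integral_eq)

section \<open>Finite combinations\<close>

definition lin :: "(real \<times> real) list \<Rightarrow> (real \<Rightarrow> real) \<Rightarrow> real" where
  "lin c F = (\<Sum>(p,a)\<leftarrow>c. a * F p)"

definition scl :: "real \<Rightarrow> (real \<times> real) list \<Rightarrow> (real \<times> real) list" where
  "scl r c = map (\<lambda>(q,b). (q, r * b)) c"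

lemma lin_Nil[simp]: "lin [] F = 0" by (simp add: lin_def)
lemma lin_Cons[simp]: "lin ((p,a) # c) F = a * F p + lin c F" by (simp add: lin_def)
lemma lin_append[simp]: "lin (c @ d) F = lin c F + lin d F" by (simp add: lin_def)

lemma lin_neg[simp]: "lin (map (\<lambda>(q,b). (q, - b)) d) F = - lin d F"
  by (induction d) auto

lemma lin_scl[simp]: "lin (scl r d) F = r * lin d F"
  by (induction d) (auto simp: scl_def algebra_simps)

lemma scl_append: "scl r (c @ d) = scl r c @ scl r d" by (simp add: scl_def)

lemma lin_add: "lin c (\<lambda>p. F p + G p) = lin c F + lin c G"
  by (induction c) (auto simp: algebra_simps)

lemma lin_diff: "lin c (\<lambda>p. F p - G p) = lin c F - lin c G"
  by (induction c) (auto simp: algebra_simps)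

lemma lin_cmult: "lin c (\<lambda>p. r * F p) = r * lin c F"
  by (induction c) (auto simp: algebra_simps)

lemma lin_zero[simp]: "lin c (\<lambda>p. 0) = 0"
  by (induction c) auto

lemma lin_swap: "lin c (\<lambda>p. lin d (\<lambda>q. H p q)) = lin d (\<lambda>q. lin c (\<lambda>p. H p q))"
  by (induction c) (auto simp: lin_add lin_cmult)

lemma lin_mult: "lin c F * lin d G = lin c (\<lambda>p. lin d (\<lambda>q. F p * G q))"
proof (induction c)
  case Nil then show ?case by simp
next
  case (Cons x c) then show ?case
    by (cases x) (auto simp: algebra_simps lin_cmult[symmetric])
qed

lemma lin_cong: "(\<And>p. F p = G p) \<Longrightarrow> lin c F = lin c G"
  by (metis ext)

lemma lin_hbi:
  assumes "\<And>p. has_bochner_integral M (F p) (I p)"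
  shows "has_bochner_integral M (\<lambda>y. lin c (\<lambda>p. F p y)) (lin c I)"
proof (induction c)
  case Nil then show ?case by (simp add: has_bochner_integral_zero)
next
  case (Cons x c) then show ?case
    by (cases x) (auto intro!: has_bochner_integral_add has_bochner_integral_mult_right assms)
qed

lemma lin_tendsto:
  assumes "\<And>p. (\<lambda>n. X n p) \<longlonglongrightarrow> Y p"
  shows "(\<lambda>n. lin c (X n)) \<longlonglongrightarrow> lin c Y"
proof (induction c)
  case Nil then show ?case by simp
next
  case (Cons x c) then show ?case
    by (cases x) (auto intro!: tendsto_add tendsto_mult assms)
qed

lemma lin_measurable:
  assumes "\<And>p. F p \<in> borel_measurable M"
  shows "(\<lambda>y. lin c (\<lambda>p. F p y)) \<in> borel_measurable M"
proof (induction c)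
  case Nil then show ?case by simp
next
  case (Cons x c) then show ?case
    using assms by (cases x) auto
qed

lemma lin_single[simp]: "lin [(x, 1)] F = F x" by simp

lemma gauss_kernel_gs: "gauss_kernel \<sigma> p q = gs (\<sigma>^2) (p - q)"
  by (simp add: gauss_kernel_def gs_def)

lemma kcomb_eval_lin: "kcomb_eval \<sigma> c x = lin c (\<lambda>p. gauss_kernel \<sigma> p x)"
  by (simp add: kcomb_eval_def lin_def)

lemma gauss_kernel_sym: "gauss_kernel \<sigma> p q = gauss_kernel \<sigma> q p"
  unfolding gauss_kernel_def by (simp add: power2_commute)

definition Bf :: "real \<Rightarrow> (real \<times> real) list \<Rightarrow> (real \<times> real) list \<Rightarrow> real" where
  "Bf \<sigma> c d = lin c (\<lambda>p. lin d (\<lambda>q. gauss_kernel \<sigma> p q))"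

lemma inner_sum_aux: "(\<Sum>(q,b)\<leftarrow>d. a * b * K q) = a * lin d K"
  by (induction d) (auto simp: algebra_simps)

lemma kcomb_sqnorm_Bf: "kcomb_sqnorm \<sigma> c = Bf \<sigma> c c"
proof -
  have "kcomb_sqnorm \<sigma> c = (\<Sum>(p,a)\<leftarrow>c. a * lin c (\<lambda>q. gauss_kernel \<sigma> p q))"
    unfolding kcomb_sqnorm_def by (simp add: inner_sum_aux case_prod_beta)
  then show ?thesis by (simp add: Bf_def lin_def)
qed

lemma lin_kdiff[simp]: "lin (kcomb_diff c d) F = lin c F - lin d F"
  by (simp add: kcomb_diff_def)

lemma Bf_sym: "Bf \<sigma> c d = Bf \<sigma> d c"
  unfolding Bf_def by (subst lin_swap) (simp add: gauss_kernel_sym)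

lemma Bf_append1[simp]: "Bf \<sigma> (c @ c') d = Bf \<sigma> c d + Bf \<sigma> c' d"
  by (simp add: Bf_def)
lemma Bf_append2[simp]: "Bf \<sigma> d (c @ c') = Bf \<sigma> d c + Bf \<sigma> d c'"
  by (simp add: Bf_def lin_add)
lemma Bf_scl1[simp]: "Bf \<sigma> (scl r c) d = r * Bf \<sigma> c d"
  by (simp add: Bf_def)
lemma Bf_scl2[simp]: "Bf \<sigma> d (scl r c) = r * Bf \<sigma> d c"
  by (simp add: Bf_def lin_cmult)
lemma Bf_kdiff1[simp]: "Bf \<sigma> (kcomb_diff c c') d = Bf \<sigma> c d - Bf \<sigma> c' d"
  by (simp add: Bf_def)
lemma Bf_kdiff2[simp]: "Bf \<sigma> d (kcomb_diff c c') = Bf \<sigma> d c - Bf \<sigma> d c'"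
  by (simp add: Bf_def lin_diff)

lemma Bf_single: "Bf \<sigma> c [(x, 1)] = kcomb_eval \<sigma> c x"
  by (simp add: Bf_def kcomb_eval_lin)

lemma Bf_single_single: "Bf \<sigma> [(x, 1)] [(x, 1)] = 1"
  by (simp add: Bf_def gauss_kernel_def)

lemma Bf_nonneg:
  assumes s: "\<sigma> > 0"
  shows "Bf \<sigma> c c \<ge> 0"
proof -
  define v where "v = \<sigma>^2 / 2"
  have v: "v > 0" using s by (simp add: v_def)
  define C where "C = sqrt (pi * v * v / (v + v))"
  have C: "C > 0" using v by (simp add: C_def)
  have vv: "v + v = \<sigma>^2" by (simp add: v_def)
  have h: "has_bochner_integral lborel
      (\<lambda>z. lin c (\<lambda>p. lin c (\<lambda>q. gs v (z - p) * gs v (z - q))))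
      (lin c (\<lambda>p. lin c (\<lambda>q. C * gs (v + v) (p - q))))"
    unfolding C_def by (intro lin_hbi gauss_prod_hbi v)
  have "lin c (\<lambda>p. lin c (\<lambda>q. C * gs (v + v) (p - q))) = C * Bf \<sigma> c c"
    by (simp add: Bf_def lin_cmult gauss_kernel_gs vv)
  moreover have "lin c (\<lambda>p. lin c (\<lambda>q. C * gs (v + v) (p - q))) \<ge> 0"
  proof (rule hbi_mono[OF has_bochner_integral_zero h])
    fix z
    show "0 \<le> lin c (\<lambda>p. lin c (\<lambda>q. gs v (z - p) * gs v (z - q)))"
      using lin_mult[of c "\<lambda>p. gs v (z - p)" c "\<lambda>p. gs v (z - p)", symmetric] by simp
  qed
  ultimately show ?thesis using C by (simp add: zero_le_mult_iff)
qed

lemma discr: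
  fixes X B Y :: real
  assumes Y: "Y \<ge> 0" and h: "\<And>r. 0 \<le> X + 2 * r * B + r^2 * Y"
  shows "B^2 \<le> X * Y"
proof (cases "Y > 0")
  case True
  have "0 \<le> X + 2 * (- B / Y) * B + (- B / Y)^2 * Y" by (rule h)
  also have "\<dots> = X - B^2 / Y" using True by (simp add: power2_eq_square field_simps)
  finally show ?thesis using True by (simp add: field_simps)
next
  case False
  then have Y0: "Y = 0" using Y by simp
  have X: "X \<ge> 0" using h[of 0] by simp
  have "B = 0"
  proof (rule ccontr)
    assume B: "B \<noteq> 0"
    have "0 \<le> X + 2 * (- (X + 1) / (2 * B)) * B + (- (X + 1) / (2 * B))^2 * Y" by (rule h)
    also have "\<dots> = -1" using B Y0 by (simp add: field_simps)
    finally show False by simp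
  qed
  then show ?thesis using X Y0 by simp
qed

definition Nm :: "real \<Rightarrow> (real \<times> real) list \<Rightarrow> real" where
  "Nm \<sigma> c = sqrt (Bf \<sigma> c c)"

lemma Nm_kcomb: "sqrt (kcomb_sqnorm \<sigma> c) = Nm \<sigma> c"
  by (simp add: Nm_def kcomb_sqnorm_Bf)

lemma Nm_nonneg: "\<sigma> > 0 \<Longrightarrow> Nm \<sigma> c \<ge> 0"
  using Bf_nonneg[of \<sigma> c] by (simp add: Nm_def)

lemma Nm_sq: "\<sigma> > 0 \<Longrightarrow> (Nm \<sigma> c)^2 = Bf \<sigma> c c"
  using Bf_nonneg[of \<sigma> c] by (simp add: Nm_def)

lemma Bf_app_scl: "Bf \<sigma> (c @ scl r d) (c @ scl r d) = Bf \<sigma> c c + 2 * r * Bf \<sigma> c d + r^2 * Bf \<sigma> d d"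
  by (simp add: Bf_sym[of \<sigma> d c] power2_eq_square algebra_simps)

lemma CS:
  assumes s: "\<sigma> > 0"
  shows "(Bf \<sigma> c d)^2 \<le> Bf \<sigma> c c * Bf \<sigma> d d"
proof (rule discr)
  show "0 \<le> Bf \<sigma> d d" using Bf_nonneg[OF s] .
  fix r
  show "0 \<le> Bf \<sigma> c c + 2 * r * Bf \<sigma> c d + r^2 * Bf \<sigma> d d"
    using Bf_nonneg[OF s, of "c @ scl r d"] by (simp only: Bf_app_scl)
qed

lemma CS_abs:
  assumes s: "\<sigma> > 0"
  shows "\<bar>Bf \<sigma> c d\<bar> \<le> Nm \<sigma> c * Nm \<sigma> d"
proof -
  have "\<bar>Bf \<sigma> c d\<bar> = sqrt ((Bf \<sigma> c d)^2)" by simp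
  also have "\<dots> \<le> sqrt (Bf \<sigma> c c * Bf \<sigma> d d)" using CS[OF s] by (rule real_sqrt_le_mono)
  finally show ?thesis by (simp add: Nm_def real_sqrt_mult)
qed

lemma eval_bound:
  assumes s: "\<sigma> > 0"
  shows "\<bar>kcomb_eval \<sigma> c x\<bar> \<le> Nm \<sigma> c"
proof -
  have "Nm \<sigma> [(x,1)] = 1" by (simp only: Nm_def Bf_single_single) simp
  then show ?thesis using CS_abs[OF s, of c "[(x,1)]"] by (simp add: Bf_single)
qed

lemma Nm_diff:
  assumes s: "\<sigma> > 0"
  shows "\<bar>Nm \<sigma> c - Nm \<sigma> d\<bar> \<le> Nm \<sigma> (kcomb_diff c d)"
proof -
  have gen: "Nm \<sigma> c \<le> Nm \<sigma> (kcomb_diff c d) + Nm \<sigma> d" for c d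
  proof -
    let ?e = "kcomb_diff c d"
    have "Bf \<sigma> c c = Bf \<sigma> ?e ?e + 2 * Bf \<sigma> ?e d + Bf \<sigma> d d"
      by (simp add: Bf_sym[of \<sigma> d c] algebra_simps)
    also have "\<dots> \<le> (Nm \<sigma> ?e)^2 + 2 * (Nm \<sigma> ?e * Nm \<sigma> d) + (Nm \<sigma> d)^2"
      using CS_abs[OF s, of ?e d] by (simp add: Nm_sq[OF s])
    also have "\<dots> = (Nm \<sigma> ?e + Nm \<sigma> d)^2" by (simp add: power2_eq_square algebra_simps)
    finally have "(Nm \<sigma> c)^2 \<le> (Nm \<sigma> ?e + Nm \<sigma> d)^2" by (simp add: Nm_sq[OF s])
    then show ?thesis using Nm_nonneg[OF s] by (meson add_nonneg_nonneg power2_le_imp_le)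
  qed
  have sym: "Nm \<sigma> (kcomb_diff d c) = Nm \<sigma> (kcomb_diff c d)"
    by (simp add: Nm_def Bf_sym[of \<sigma> d c] algebra_simps)
  show ?thesis using gen[of c d] gen[of d c] sym by linarith
qed

lemma approx_conv:
  assumes s: "\<sigma> > 0" and A: "rkhs_approx \<sigma> f g"
  shows "convergent (\<lambda>n. Nm \<sigma> (g n))"
proof -
  have "Cauchy (\<lambda>n. Nm \<sigma> (g n))"
  proof (rule metric_CauchyI)
    fix e :: real assume e: "e > 0"
    then obtain M where M: "\<forall>m\<ge>M. \<forall>n\<ge>M. Nm \<sigma> (kcomb_diff (g m) (g n)) < e"
      using A unfolding rkhs_approx_def Nm_kcomb by blast
    show "\<exists>M. \<forall>m\<ge>M. \<forall>n\<ge>M. dist (Nm \<sigma> (g m)) (Nm \<sigma> (g n)) < e"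
      using M Nm_diff[OF s] by (metis dist_real_def le_less_trans)
  qed
  then show ?thesis by (simp add: Cauchy_convergent_iff)
qed

lemma approx_limit:
  assumes s: "\<sigma> > 0" and A: "rkhs_approx \<sigma> f g"
  obtains L where "(\<lambda>n. Nm \<sigma> (g n)) \<longlonglongrightarrow> L" "L \<ge> 0"
proof -
  obtain L where L: "(\<lambda>n. Nm \<sigma> (g n)) \<longlonglongrightarrow> L"
    using approx_conv[OF s A] by (auto simp: convergent_def)
  moreover have "L \<ge> 0" using L Nm_nonneg[OF s] by (metis LIMSEQ_le_const)
  ultimately show ?thesis using that by blast
qed

lemma sqrt_inv_tendsto: "(\<lambda>n. sqrt (inverse (real (Suc n)))) \<longlonglongrightarrow> 0"
  using tendsto_real_sqrt[OF LIMSEQ_inverse_real_of_nat] by simp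

lemma aron:
  assumes s: "\<sigma> > 0" and M: "M \<ge> 0" and bnd: "\<And>c. \<bar>lin c F\<bar> \<le> M * Nm \<sigma> c"
  shows "\<exists>g L. rkhs_approx \<sigma> F g \<and> (\<lambda>n. Nm \<sigma> (g n)) \<longlonglongrightarrow> L \<and> L \<le> M"
proof -
  define J where "J c = Bf \<sigma> c c - 2 * lin c F" for c
  have Jlow: "J c \<ge> -(M ^ 2)" for c
  proof -
    have "lin c F \<le> M * Nm \<sigma> c" using bnd[of c] by simp
    then have "J c \<ge> (Nm \<sigma> c)^2 - 2 * (M * Nm \<sigma> c)" by (simp add: J_def Nm_sq[OF s])
    moreover have "(Nm \<sigma> c)^2 - 2 * (M * Nm \<sigma> c) = (Nm \<sigma> c - M)^2 -(M ^ 2)"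
      by (simp add: power2_eq_square algebra_simps)
    ultimately show ?thesis by (smt (verit) zero_le_power2)
  qed
  define m where "m = Inf (range J)"
  have bdd: "bdd_below (range J)" using Jlow by (intro bdd_belowI[of _ "-(M ^ 2)"]) auto
  have mJ: "m \<le> J c" for c unfolding m_def by (rule cInf_lower[OF rangeI bdd])
  have ex: "\<exists>c. J c < m + 1 / real (Suc n)" for n
  proof (rule ccontr)
    assume "\<not> ?thesis"
    then have "\<forall>c. m + 1 / real (Suc n) \<le> J c" by (simp add: not_less)
    then have "m + 1 / real (Suc n) \<le> m" unfolding m_def by (intro cInf_greatest) auto
    then show False by simp
  qed
  then obtain g where g: "\<And>n. J (g n) < m + 1 / real (Suc n)" by metis
  define z where "z n = sqrt (inverse (real (Suc n)))" for n
  have z: "z \<longlonglongrightarrow> 0" unfolding z_def by (rule sqrt_inv_tendsto)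
  have z2: "(z n)^2 = inverse (real (Suc n))" for n by (simp add: z_def)
  have z0: "z n \<ge> 0" for n by (simp add: z_def)
  have delta: "0 \<le> J (g n) - m" "J (g n) - m \<le> (z n)^2" for n
    using mJ[of "g n"] g[of n] by (auto simp: z2 field_simps)
  have var: "(Bf \<sigma> c d - lin d F)^2 \<le> (J c - m) * Bf \<sigma> d d" for c d
  proof (rule discr)
    show "0 \<le> Bf \<sigma> d d" by (rule Bf_nonneg[OF s])
    fix r
    have "J (c @ scl r d) = J c + 2 * r * (Bf \<sigma> c d - lin d F) + r^2 * Bf \<sigma> d d"
      unfolding J_def Bf_app_scl by (simp add: algebra_simps)
    then show "0 \<le> J c - m + 2 * r * (Bf \<sigma> c d - lin d F) + r^2 * Bf \<sigma> d d"
      using mJ[of "c @ scl r d"] by simp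
  qed
  have par: "Bf \<sigma> (kcomb_diff c d) (kcomb_diff c d) \<le> 2 * ((J c - m) + (J d - m))" for c d
  proof -
    have "Bf \<sigma> (kcomb_diff c d) (kcomb_diff c d) = 2 * (J c + J d - 2 * J (scl (1/2) (c @ d)))"
      unfolding J_def by (simp add: Bf_sym[of \<sigma> d c] algebra_simps)
    then show ?thesis using mJ[of "scl (1/2) (c @ d)"] by simp
  qed
  have cauchy: "\<forall>e>0. \<exists>N. \<forall>m'\<ge>N. \<forall>n\<ge>N. sqrt (kcomb_sqnorm \<sigma> (kcomb_diff (g m') (g n))) < e"
  proof (intro allI impI)
    fix e :: real assume e: "e > 0"
    obtain N where N: "N > 0" "inverse (real N) < e^2 / 4"
      using ex_inverse_of_nat_less[of "e^2/4"] e by auto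
    show "\<exists>N. \<forall>m'\<ge>N. \<forall>n\<ge>N. sqrt (kcomb_sqnorm \<sigma> (kcomb_diff (g m') (g n))) < e"
    proof (intro exI allI impI)
      fix m' n assume mn: "N \<le> m'" "N \<le> n"
      have i1: "inverse (real (Suc m')) \<le> inverse (real N)" using mn N by (simp add: le_imp_inverse_le)
      have i2: "inverse (real (Suc n)) \<le> inverse (real N)" using mn N by (simp add: le_imp_inverse_le)
      have "Bf \<sigma> (kcomb_diff (g m') (g n)) (kcomb_diff (g m') (g n)) \<le> 2 * ((z m')^2 + (z n)^2)"
        using par[of "g m'" "g n"] add_mono[OF delta(2)[of m'] delta(2)[of n]] by (smt (verit))
      also have "\<dots> \<le> 4 * inverse (real N)" using i1 i2 unfolding z2 by (smt (verit))
      also have "\<dots> < e^2" using N(2) by simp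
      finally have lt: "Bf \<sigma> (kcomb_diff (g m') (g n)) (kcomb_diff (g m') (g n)) < e^2" .
      have "sqrt (kcomb_sqnorm \<sigma> (kcomb_diff (g m') (g n))) < sqrt (e^2)"
        unfolding kcomb_sqnorm_Bf by (rule real_sqrt_less_mono[OF lt])
      then show "sqrt (kcomb_sqnorm \<sigma> (kcomb_diff (g m') (g n))) < e" using e by simp
    qed
  qed
  have pw: "(\<lambda>n. kcomb_eval \<sigma> (g n) x) \<longlonglongrightarrow> F x" for x
  proof -
    have b: "norm (kcomb_eval \<sigma> (g n) x - F x) \<le> z n" for n
    proof -
      have "(kcomb_eval \<sigma> (g n) x - F x)^2 \<le> (J (g n) - m) * 1"
        using var[of "g n" "[(x,1)]"] unfolding Bf_single_single unfolding Bf_single lin_single .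
      also have "\<dots> \<le> (z n)^2" using delta[of n] by simp
      finally have sq: "\<bar>kcomb_eval \<sigma> (g n) x - F x\<bar>^2 \<le> (z n)^2" by simp
      show ?thesis using power2_le_imp_le[OF sq z0[of n]] by simp
    qed
    have "(\<lambda>n. kcomb_eval \<sigma> (g n) x - F x) \<longlonglongrightarrow> 0"
      by (rule Lim_null_comparison[OF _ z]) (use b in \<open>simp add: always_eventually\<close>)
    from tendsto_add[OF this tendsto_const[of "F x"]] show ?thesis by simp
  qed
  have A: "rkhs_approx \<sigma> F g" unfolding rkhs_approx_def using cauchy pw by blast
  obtain L where L: "(\<lambda>n. Nm \<sigma> (g n)) \<longlonglongrightarrow> L" using approx_limit[OF s A] by blast
  have nb: "Nm \<sigma> (g n) \<le> M + z n" for n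
  proof -
    let ?N = "Nm \<sigma> (g n)" and ?D = "Bf \<sigma> (g n) (g n) - lin (g n) F"
    have "?D ^ 2 \<le> (z n)^2 * ?N ^ 2"
      using var[of "g n" "g n"] delta[of n] Bf_nonneg[OF s, of "g n"]
      by (simp add: Nm_sq[OF s]) (meson mult_right_mono order_trans)
    then have "\<bar>?D\<bar> \<le> z n * ?N"
      using z0[of n] Nm_nonneg[OF s, of "g n"] by (metis abs_le_square_iff abs_of_nonneg power_mult_distrib zero_le_mult_iff)
    moreover have "lin (g n) F \<le> M * ?N" using bnd[of "g n"] by simp
    ultimately have "?N ^ 2 \<le> (z n + M) * ?N" by (simp add: Nm_sq[OF s] algebra_simps)
    then show ?thesis using Nm_nonneg[OF s, of "g n"] z0[of n] M
      by (cases "?N = 0") (auto simp: power2_eq_square)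
  qed
  have "L \<le> M + 0"
    by (rule LIMSEQ_le[OF L tendsto_add[OF tendsto_const z]]) (use nb in auto)
  then show ?thesis using A L by auto
qed

section \<open>The key bilinear estimate\<close>

lemma gs_hbi1:
  assumes V: "V > 0"
  shows "has_bochner_integral lborel (\<lambda>w. gs V (w - m)) (sqrt (pi * V))"
proof -
  have k: "1 / V > 0" using V by simp
  have eq: "(\<lambda>w. gs V (w - m)) = (\<lambda>w. exp (- (1 / V) * (w - m)^2))"
    by (simp add: gs_def)
  have "sqrt (pi / (1 / V)) = sqrt (pi * V)" by simp
  then show ?thesis unfolding eq using gauss_hbi[OF k, of m] by simp
qed

lemma gs_prod_same:
  assumes v: "v > 0"
  shows "gs v (z - p) * gs v (z - q) = gs (2 * v) (p - q) * gs (v / 2) (z - (p + q) / 2)"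
proof -
  have "(z - p)^2 / v + (z - q)^2 / v = (p - q)^2 / (2 * v) + (z - (p + q) / 2)^2 / (v / 2)"
    using v by (simp add: field_simps power2_eq_square)
  then have "- ((z - p)^2) / v + - ((z - q)^2) / v = - ((p - q)^2) / (2 * v) + - ((z - (p + q) / 2)^2) / (v / 2)"
    by (simp add: field_simps)
  then show ?thesis unfolding gs_def by (simp add: exp_add[symmetric])
qed

lemma amgm_opt:
  fixes X P R :: real
  assumes P: "P \<ge> 0" and R: "R \<ge> 0" and h: "\<And>l. l > 0 \<Longrightarrow> \<bar>X\<bar> \<le> (l * P + R / l) / 2"
  shows "X^2 \<le> P * R"
proof (cases "X = 0")
  case True then show ?thesis using P R by simp
next
  case X: False
  show ?thesis
  proof (cases "P > 0 \<and> R > 0")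
    case True
    define l where "l = sqrt (R / P)"
    have l: "l > 0" using True by (simp add: l_def)
    have "l * P = sqrt (P * R)" using True unfolding l_def
      by (metis less_eq_real_def mult.commute real_div_sqrt real_sqrt_divide real_sqrt_mult times_divide_eq_right)
    moreover have "R / l = sqrt (P * R)" using True unfolding l_def
      by (simp add: real_sqrt_divide real_sqrt_mult real_div_sqrt field_simps)
    ultimately have "\<bar>X\<bar> \<le> sqrt (P * R)" using h[OF l] by simp
    then have "\<bar>X\<bar>^2 \<le> (sqrt (P * R))^2" by (rule power_mono) simp
    then show ?thesis using P R by simp
  next
    case False
    show ?thesis
    proof (cases "P = 0")
      case P0: True
      define l where "l = (R + 1) / \<bar>X\<bar>"
      have l: "l > 0" using X R by (simp add: l_def)
      have "\<bar>X\<bar> \<le> R / l / 2" using h[OF l] P0 by simp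
      also have "\<dots> = R * \<bar>X\<bar> / (2 * (R + 1))" using X R by (simp add: l_def field_simps)
      also have "\<dots> < \<bar>X\<bar>" using X R by (simp add: field_simps) (smt (verit) mult_nonneg_nonneg abs_ge_zero)
      finally show ?thesis by simp
    next
      case PN: False
      then have Pp: "P > 0" using P by auto
      then have R0: "R = 0" using False R by auto
      define l where "l = \<bar>X\<bar> / P"
      have l: "l > 0" using X Pp by (simp add: l_def)
      have "\<bar>X\<bar> \<le> l * P / 2" using h[OF l] R0 by simp
      also have "\<dots> = \<bar>X\<bar> / 2" using Pp by (simp add: l_def)
      finally show ?thesis using X by simp
    qed
  qed
qed

lemma hbi_lin2:
  fixes f g :: "'a \<Rightarrow> real"
  assumes "has_bochner_integral M f I" "has_bochner_integral M g J"
  shows "has_bochner_integral M (\<lambda>x. al * f x + be * g x) (al * I + be * J)"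
  using has_bochner_integral_add[OF has_bochner_integral_mult_right[OF assms(1)] has_bochner_integral_mult_right[OF assms(2)]]
  by simp

lemma amgm2:
  fixes x y l :: real
  assumes l: "l > 0"
  shows "2 * \<bar>x * y\<bar> \<le> l * x^2 + y^2 / l"
proof -
  have "l * x^2 + y^2 / l - 2 * \<bar>x * y\<bar> = (l * \<bar>x\<bar> - \<bar>y\<bar>)^2 / l"
    using l by (simp add: field_simps power2_eq_square abs_mult)
  moreover have "(l * \<bar>x\<bar> - \<bar>y\<bar>)^2 / l \<ge> 0" using l by simp
  ultimately show ?thesis by linarith
qed

lemma cancel_aux: "(y::real) \<noteq> 0 \<Longrightarrow> x / y * (y * z) = x * z" by simp

lemma key_sq:
  fixes \<sigma> a s :: real
  assumes sg: "\<sigma> > 0" and a: "a > 0" and v3pos: "s - \<sigma>^2/2 - a^2 * \<sigma>^2/2 > 0"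
  shows "(lin c (\<lambda>p. lin d (\<lambda>x. gs s (p - a * x))))^2 * (\<sigma>^2 / s) \<le> Bf \<sigma> c c * Bf \<sigma> d d / a"
proof -
  define v1 where "v1 = \<sigma>^2 / 2"
  define v2 where "v2 = a^2 * \<sigma>^2 / 2"
  define v3 where "v3 = s - v1 - v2"
  have v1: "v1 > 0" using sg by (simp add: v1_def)
  have v2: "v2 > 0" using sg a by (simp add: v2_def)
  have v3: "v3 > 0" using v3pos by (simp add: v3_def v1_def v2_def)
  have sv: "s = (v1 + v3) + v2" by (simp add: v3_def)
  have spos: "s > 0" using v1 v2 v3 sv by simp
  define c13 where "c13 = sqrt (pi * v1 * v3 / (v1 + v3))"
  define c2 where "c2 = sqrt (pi * (v1 + v3) * v2 / ((v1 + v3) + v2))"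
  define c' where "c' = sqrt (pi * (v1 / 2) * v3 / (v1 / 2 + v3))"
  define cPsi where "cPsi = c' * sqrt (pi * (v1 / 2 + v3))"
  define kap where "kap = sqrt (pi * v2 * v2 / (v2 + v2))"
  define g3 where "g3 = sqrt (pi * v3)"
  define H where "H z = lin c (\<lambda>p. gs v1 (z - p))" for z
  define E where "E w = lin d (\<lambda>x. gs v2 (w - a * x))" for w
  define Phi where "Phi w = lin c (\<lambda>p. c13 * gs (v1 + v3) (p - w))" for w
  define Psi where "Psi w = lin c (\<lambda>p. lin c (\<lambda>q. gs (2 * v1) (p - q) * (c' * gs (v1 / 2 + v3) ((p + q) / 2 - w))))" for w
  define T where "T = lin c (\<lambda>p. lin d (\<lambda>x. gs s (p - a * x)))"
  have ker1: "gs (2 * v1) (p - q) = gauss_kernel \<sigma> p q" for p q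
    by (simp add: v1_def gauss_kernel_gs)
  have ker2: "gs (v2 + v2) (a * x - a * y) = gauss_kernel \<sigma> x y" for x y
  proof -
    have "(a * x - a * y)^2 / (v2 + v2) = (x - y)^2 / \<sigma>^2"
      using a sg by (simp add: v2_def power2_eq_square field_simps)
    then show ?thesis by (simp add: gs_def gauss_kernel_def)
  qed
  have F1: "has_bochner_integral lborel (\<lambda>z. H z * gs v3 (z - w)) (Phi w)" for w
  proof -
    have "has_bochner_integral lborel (\<lambda>z. lin c (\<lambda>p. gs v1 (z - p) * gs v3 (z - w))) (Phi w)"
      unfolding Phi_def c13_def by (intro lin_hbi gauss_prod_hbi v1 v3)
    moreover have "(\<lambda>z. lin c (\<lambda>p. gs v1 (z - p) * gs v3 (z - w))) = (\<lambda>z. H z * gs v3 (z - w))"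
      unfolding H_def by (simp add: lin_cmult[symmetric] mult.commute)
    ultimately show ?thesis by simp
  qed
  have F2: "has_bochner_integral lborel (\<lambda>z. (H z)^2 * gs v3 (z - w)) (Psi w)" for w
  proof -
    have "has_bochner_integral lborel (\<lambda>z. lin c (\<lambda>p. lin c (\<lambda>q. gs (2 * v1) (p - q) * (gs (v1 / 2) (z - (p + q) / 2) * gs v3 (z - w))))) (Psi w)"
      unfolding Psi_def c'_def
      by (intro lin_hbi has_bochner_integral_mult_right gauss_prod_hbi v3) (use v1 in simp)
    moreover have "(\<lambda>z. lin c (\<lambda>p. lin c (\<lambda>q. gs (2 * v1) (p - q) * (gs (v1 / 2) (z - (p + q) / 2) * gs v3 (z - w)))))
        = (\<lambda>z. (H z)^2 * gs v3 (z - w))"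
    proof
      fix z
      have "(H z)^2 * gs v3 (z - w) = lin c (\<lambda>p. lin c (\<lambda>q. gs v1 (z - p) * gs v1 (z - q))) * gs v3 (z - w)"
        unfolding H_def power2_eq_square lin_mult ..
      also have "\<dots> = lin c (\<lambda>p. lin c (\<lambda>q. gs (2 * v1) (p - q) * (gs (v1 / 2) (z - (p + q) / 2) * gs v3 (z - w))))"
        by (simp add: gs_prod_same[OF v1] lin_cmult[symmetric] mult.commute mult.left_commute)
      finally show "lin c (\<lambda>p. lin c (\<lambda>q. gs (2 * v1) (p - q) * (gs (v1 / 2) (z - (p + q) / 2) * gs v3 (z - w))))
          = (H z)^2 * gs v3 (z - w)" by simp
    qed
    ultimately show ?thesis by simp
  qed
  have F3: "has_bochner_integral lborel (\<lambda>z. gs v3 (z - w)) g3" for w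
    unfolding g3_def by (rule gs_hbi1[OF v3])
  have F4: "has_bochner_integral lborel Psi (cPsi * Bf \<sigma> c c)"
  proof -
    have "has_bochner_integral lborel (\<lambda>w. lin c (\<lambda>p. lin c (\<lambda>q. gs (2 * v1) (p - q) * (c' * gs (v1 / 2 + v3) (w - (p + q) / 2)))))
       (lin c (\<lambda>p. lin c (\<lambda>q. gs (2 * v1) (p - q) * (c' * sqrt (pi * (v1 / 2 + v3))))))"
      by (intro lin_hbi has_bochner_integral_mult_right gs_hbi1) (use v1 v3 in simp)
    moreover have "(\<lambda>w. lin c (\<lambda>p. lin c (\<lambda>q. gs (2 * v1) (p - q) * (c' * gs (v1 / 2 + v3) (w - (p + q) / 2))))) = Psi"
      unfolding Psi_def by (simp add: gs_sym[of "v1 / 2 + v3"])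
    moreover have "lin c (\<lambda>p. lin c (\<lambda>q. gs (2 * v1) (p - q) * (c' * sqrt (pi * (v1 / 2 + v3))))) = cPsi * Bf \<sigma> c c"
    proof -
      have "lin c (\<lambda>p. lin c (\<lambda>q. gs (2 * v1) (p - q) * (c' * sqrt (pi * (v1 / 2 + v3)))))
          = lin c (\<lambda>p. lin c (\<lambda>q. cPsi * gauss_kernel \<sigma> p q))"
        unfolding ker1 cPsi_def by (simp add: mult.commute)
      also have "\<dots> = cPsi * Bf \<sigma> c c" by (simp add: lin_cmult Bf_def)
      finally show ?thesis .
    qed
    ultimately show ?thesis by simp
  qed
  have F5: "has_bochner_integral lborel (\<lambda>w. (E w)^2) (kap * Bf \<sigma> d d)"
  proof -
    have "has_bochner_integral lborel (\<lambda>w. lin d (\<lambda>x. lin d (\<lambda>y. gs v2 (w - a * x) * gs v2 (w - a * y))))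
       (lin d (\<lambda>x. lin d (\<lambda>y. kap * gs (v2 + v2) (a * x - a * y))))"
      unfolding kap_def by (intro lin_hbi gauss_prod_hbi v2)
    moreover have "(\<lambda>w. lin d (\<lambda>x. lin d (\<lambda>y. gs v2 (w - a * x) * gs v2 (w - a * y)))) = (\<lambda>w. (E w)^2)"
      unfolding E_def power2_eq_square lin_mult ..
    moreover have "lin d (\<lambda>x. lin d (\<lambda>y. kap * gs (v2 + v2) (a * x - a * y))) = kap * Bf \<sigma> d d"
      unfolding Bf_def ker2 by (simp add: lin_cmult[symmetric])
    ultimately show ?thesis by simp
  qed
  have F6: "has_bochner_integral lborel (\<lambda>w. Phi w * E w) (c13 * c2 * T)"
  proof -
    have "has_bochner_integral lborel (\<lambda>w. lin c (\<lambda>p. lin d (\<lambda>x. c13 * (gs (v1 + v3) (w - p) * gs v2 (w - a * x)))))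
       (lin c (\<lambda>p. lin d (\<lambda>x. c13 * (c2 * gs ((v1 + v3) + v2) (p - a * x)))))"
      unfolding c2_def by (intro lin_hbi has_bochner_integral_mult_right gauss_prod_hbi v2) (use v1 v3 in simp)
    moreover have "(\<lambda>w. lin c (\<lambda>p. lin d (\<lambda>x. c13 * (gs (v1 + v3) (w - p) * gs v2 (w - a * x))))) = (\<lambda>w. Phi w * E w)"
      unfolding Phi_def E_def lin_mult by (simp add: gs_sym[of "v1 + v3"] mult.assoc)
    moreover have "lin c (\<lambda>p. lin d (\<lambda>x. c13 * (c2 * gs ((v1 + v3) + v2) (p - a * x)))) = c13 * c2 * T"
      unfolding T_def sv[symmetric] by (simp add: lin_cmult)
    ultimately show ?thesis by simp
  qed
  have pw: "\<bar>Phi w * E w\<bar> \<le> (l / 2) * Psi w + (g3 / (2 * l)) * (E w)^2" if l: "l > 0" for w l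
  proof -
    have I1: "has_bochner_integral lborel (\<lambda>z. H z * gs v3 (z - w) * E w) (Phi w * E w)"
      by (rule has_bochner_integral_mult_left[OF F1])
    have I2: "has_bochner_integral lborel (\<lambda>z. (l / 2) * ((H z)^2 * gs v3 (z - w)) + ((E w)^2 / (2 * l)) * gs v3 (z - w))
        ((l / 2) * Psi w + ((E w)^2 / (2 * l)) * g3)"
      by (rule hbi_lin2[OF F2 F3])
    have ineq: "\<bar>H z * gs v3 (z - w) * E w\<bar> \<le> (l / 2) * ((H z)^2 * gs v3 (z - w)) + ((E w)^2 / (2 * l)) * gs v3 (z - w)" for z
    proof -
      have g: "gs v3 (z - w) > 0" by (rule gs_pos)
      have "2 * \<bar>H z * E w\<bar> \<le> l * (H z)^2 + (E w)^2 / l" by (rule amgm2[OF l])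
      then have "2 * \<bar>H z * E w\<bar> * gs v3 (z - w) \<le> (l * (H z)^2 + (E w)^2 / l) * gs v3 (z - w)"
        using g by (simp add: mult_right_mono)
      moreover have "\<bar>H z * gs v3 (z - w) * E w\<bar> = \<bar>H z * E w\<bar> * gs v3 (z - w)"
        using g by (simp add: abs_mult)
      ultimately show ?thesis using l by (simp add: field_simps)
    qed
    have u1: "Phi w * E w \<le> (l / 2) * Psi w + ((E w)^2 / (2 * l)) * g3"
      by (rule hbi_mono[OF I1 I2]) (use ineq in \<open>smt (verit)\<close>)
    have u2: "- (Phi w * E w) \<le> (l / 2) * Psi w + ((E w)^2 / (2 * l)) * g3"
      by (rule hbi_mono[OF has_bochner_integral_minus[OF I1] I2]) (use ineq in \<open>smt (verit)\<close>)
    show ?thesis using u1 u2 by (simp add: field_simps abs_le_iff)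
  qed
  have tot: "\<bar>c13 * c2 * T\<bar> \<le> (l * (cPsi * Bf \<sigma> c c) + (g3 * kap * Bf \<sigma> d d) / l) / 2" if l: "l > 0" for l
  proof -
    have I3: "has_bochner_integral lborel (\<lambda>w. (l / 2) * Psi w + (g3 / (2 * l)) * (E w)^2)
        ((l / 2) * (cPsi * Bf \<sigma> c c) + (g3 / (2 * l)) * (kap * Bf \<sigma> d d))"
      by (rule hbi_lin2[OF F4 F5])
    have u1: "c13 * c2 * T \<le> (l / 2) * (cPsi * Bf \<sigma> c c) + (g3 / (2 * l)) * (kap * Bf \<sigma> d d)"
      by (rule hbi_mono[OF F6 I3]) (use pw[OF l] in \<open>smt (verit)\<close>)
    have u2: "- (c13 * c2 * T) \<le> (l / 2) * (cPsi * Bf \<sigma> c c) + (g3 / (2 * l)) * (kap * Bf \<sigma> d d)"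
      by (rule hbi_mono[OF has_bochner_integral_minus[OF F6] I3]) (use pw[OF l] in \<open>smt (verit)\<close>)
    show ?thesis using u1 u2 l by (simp add: field_simps abs_le_iff)
  qed
  have cpos: "cPsi \<ge> 0" "g3 \<ge> 0" "kap \<ge> 0" "c13 > 0" "c2 > 0"
    using v1 v2 v3 by (auto simp: cPsi_def c'_def g3_def kap_def c13_def c2_def)
  have main: "(c13 * c2 * T)^2 \<le> (cPsi * Bf \<sigma> c c) * (g3 * kap * Bf \<sigma> d d)"
    by (rule amgm_opt[OF _ _ tot]) (use cpos Bf_nonneg[OF sg] in auto)
  define K where "K = pi^2 * v3 * a * \<sigma>^2 / 4"
  define P where "P = pi^2 * v1 * v3 * v2 / s"
  have Ppos: "P > 0" using v1 v2 v3 spos by (simp add: P_def)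
  have cc: "(c13 * c2)^2 = P"
  proof -
    have "c13^2 = pi * v1 * v3 / (v1 + v3)" unfolding c13_def using v1 v3 by simp
    moreover have "c2^2 = pi * (v1 + v3) * v2 / s" unfolding c2_def sv using v1 v2 v3 by simp
    moreover have "(pi * v1 * v3 / (v1 + v3)) * (pi * (v1 + v3) * v2 / s) = P"
    proof -
      have ne: "v1 + v3 \<noteq> 0" using v1 v3 by simp
      have cancel: "\<And>x y z. (y::real) \<noteq> 0 \<Longrightarrow> x / y * (y * z) = x * z" by simp
      have "(pi * v1 * v3 / (v1 + v3)) * (pi * (v1 + v3) * v2 / s) = (pi * v1 * v3 / (v1 + v3)) * ((v1 + v3) * (pi * v2 / s))"
        by (simp add: algebra_simps)
      also have "\<dots> = pi * v1 * v3 * (pi * v2 / s)" using cancel[OF ne] .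
      also have "\<dots> = P" unfolding P_def by (simp add: power2_eq_square)
      finally show ?thesis .
    qed
    ultimately show ?thesis unfolding power_mult_distrib by simp
  qed
  have kk: "cPsi * g3 * kap = K"
  proof -
    have "c'^2 = pi * (v1 / 2) * v3 / (v1 / 2 + v3)" unfolding c'_def using v1 v3 by simp
    then have "cPsi^2 = pi * (v1 / 2) * v3 / (v1 / 2 + v3) * (pi * (v1 / 2 + v3))"
      unfolding cPsi_def power_mult_distrib using v1 v3 by simp
    also have "\<dots> = pi * (v1 / 2) * v3 / (v1 / 2 + v3) * ((v1 / 2 + v3) * pi)" by (simp add: mult.commute)
    also have "\<dots> = pi * (v1 / 2) * v3 * pi" by (rule cancel_aux) (use v1 v3 in simp)
    finally have cP: "cPsi^2 = pi^2 * v1 * v3 / 2" by (simp add: power2_eq_square)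
    have g: "g3^2 = pi * v3" unfolding g3_def using v3 by simp
    have k: "kap^2 = pi * v2 / 2" unfolding kap_def using v2 by (simp add: field_simps power2_eq_square)
    have "(cPsi * g3 * kap)^2 = pi^2 * v1 * v3 / 2 * (pi * v3) * (pi * v2 / 2)"
      unfolding power_mult_distrib cP g k ..
    also have "\<dots> = K^2" unfolding K_def v1_def v2_def by (simp add: field_simps power2_eq_square)
    finally have "(cPsi * g3 * kap)^2 = K^2" .
    moreover have "K \<ge> 0" using v3 a by (simp add: K_def)
    ultimately show ?thesis using cpos by (metis mult_nonneg_nonneg power2_eq_iff_nonneg)
  qed
  have "P * T^2 \<le> K * (Bf \<sigma> c c * Bf \<sigma> d d)"
    using main unfolding power_mult_distrib[of "c13 * c2" T] cc kk[symmetric] by (simp add: algebra_simps)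
  then have "T^2 \<le> K * (Bf \<sigma> c c * Bf \<sigma> d d) / P" using Ppos by (simp add: field_simps)
  then have "T^2 * (\<sigma>^2 / s) \<le> K * (Bf \<sigma> c c * Bf \<sigma> d d) / P * (\<sigma>^2 / s)"
    by (rule mult_right_mono) (use spos in simp)
  also have "\<dots> = (Bf \<sigma> c c * Bf \<sigma> d d) * (K * \<sigma>^2 / (P * s))" by (simp add: field_simps)
  also have "K * \<sigma>^2 / (P * s) = 1 / a"
    unfolding K_def P_def v1_def v2_def using a sg v3 spos by (simp add: field_simps power2_eq_square)
  finally show ?thesis unfolding T_def by simp
qed

lemma transfer:
  assumes s: "\<sigma> > 0" and e: "e > 0" and f: "f \<in> gauss_rkhs \<sigma>"
    and H: "\<And>g L. rkhs_approx \<sigma> f g \<Longrightarrow> (\<lambda>n. Nm \<sigma> (g n)) \<longlonglongrightarrow> L \<Longrightarrow> \<forall>d. \<bar>lin d F\<bar> \<le> e * L * Nm \<sigma> d"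
  shows "F \<in> gauss_rkhs \<sigma> \<and> gauss_rkhs_norm \<sigma> F \<le> e * gauss_rkhs_norm \<sigma> f"
proof -
  define S where "S h = {L. \<exists>g. rkhs_approx \<sigma> h g \<and> (\<lambda>n. Nm \<sigma> (g n)) \<longlonglongrightarrow> L}" for h
  have normS: "gauss_rkhs_norm \<sigma> h = Inf (S h)" for h
    unfolding gauss_rkhs_norm_def S_def Nm_kcomb ..
  have bdd: "bdd_below (S h)" for h
  proof (rule bdd_belowI[of _ 0])
    fix L assume "L \<in> S h"
    then obtain g where "(\<lambda>n. Nm \<sigma> (g n)) \<longlonglongrightarrow> L" by (auto simp: S_def)
    then show "0 \<le> L" using Nm_nonneg[OF s] by (metis LIMSEQ_le_const)
  qed
  obtain g0 where g0: "rkhs_approx \<sigma> f g0" using f by (auto simp: gauss_rkhs_def)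
  obtain L0 where L0: "(\<lambda>n. Nm \<sigma> (g0 n)) \<longlonglongrightarrow> L0" using approx_limit[OF s g0] by blast
  have ne: "S f \<noteq> {}" using g0 L0 by (auto simp: S_def)
  have each: "F \<in> gauss_rkhs \<sigma> \<and> gauss_rkhs_norm \<sigma> F \<le> e * L" if L: "L \<in> S f" for L
  proof -
    obtain g where g: "rkhs_approx \<sigma> f g" "(\<lambda>n. Nm \<sigma> (g n)) \<longlonglongrightarrow> L" using L by (auto simp: S_def)
    have L0: "L \<ge> 0" using g(2) Nm_nonneg[OF s] by (metis LIMSEQ_le_const)
    have "\<exists>h L'. rkhs_approx \<sigma> F h \<and> (\<lambda>n. Nm \<sigma> (h n)) \<longlonglongrightarrow> L' \<and> L' \<le> e * L"
      by (rule aron[OF s]) (use e L0 H[OF g] in auto)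
    then obtain h L' where h: "rkhs_approx \<sigma> F h" "(\<lambda>n. Nm \<sigma> (h n)) \<longlonglongrightarrow> L'" "L' \<le> e * L" by blast
    have "L' \<in> S F" using h by (auto simp: S_def)
    then have "Inf (S F) \<le> L'" by (rule cInf_lower[OF _ bdd])
    then show ?thesis using h by (auto simp: normS gauss_rkhs_def)
  qed
  have mem: "F \<in> gauss_rkhs \<sigma>" using each[of L0] g0 L0 by (auto simp: S_def)
  have "gauss_rkhs_norm \<sigma> F / e \<le> Inf (S f)"
  proof (rule cInf_greatest[OF ne])
    fix L assume "L \<in> S f"
    then show "gauss_rkhs_norm \<sigma> F / e \<le> L" using each e by (simp add: field_simps mult.commute)
  qed
  then show ?thesis using mem e by (simp add: normS field_simps)
qed

lemma main_pos:
  fixes \<alpha> \<sigma> t :: real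
  assumes al: "\<alpha> > 0" and sg: "\<sigma> > 0" and t: "t > 0" and f: "f \<in> gauss_rkhs \<sigma>"
  shows "koopman \<alpha> t f \<in> gauss_rkhs \<sigma> \<and>
           gauss_rkhs_norm \<sigma> (koopman \<alpha> t f) \<le> exp (\<alpha> / 2 * t) * gauss_rkhs_norm \<sigma> f"
proof -
  define a where "a = exp (- \<alpha> * t)"
  define c where "c = ou_c \<alpha> t"
  define s where "s = \<sigma>^2 + 1 / c"
  define A where "A = sqrt (c / pi) * sqrt (pi * \<sigma>^2 * (1 / c) / (\<sigma>^2 + 1 / c))"
  define e where "e = exp (\<alpha> / 2 * t)"
  have a0: "a > 0" by (simp add: a_def)
  have a1: "a < 1" using al t by (simp add: a_def)
  have a2: "a^2 = exp (- 2 * \<alpha> * t)"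
    unfolding a_def power2_eq_square exp_add[symmetric] by simp
  have c0: "c > 0"
  proof -
    have "exp (- 2 * \<alpha> * t) < 1" using al t by simp
    then show ?thesis using al by (simp add: c_def ou_c_def)
  qed
  have dens: "ou_density \<alpha> t x y = sqrt (c / pi) * gs (1 / c) (y - a * x)" for x y
    by (simp add: ou_density_def c_def a_def gs_def)
  have s0: "s > 0" using c0 sg by (simp add: s_def add_pos_pos)
  have A2: "A^2 = \<sigma>^2 / s"
  proof -
    have "A^2 = (c / pi) * (pi * \<sigma>^2 * (1 / c) / (\<sigma>^2 + 1 / c))"
      unfolding A_def power_mult_distrib using c0 sg by simp
    also have "\<dots> = \<sigma>^2 / s" using c0 by (simp add: s_def field_simps)
    finally show ?thesis .
  qed
  have A0: "A \<ge> 0" using c0 by (simp add: A_def)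
  have e2: "e^2 = 1 / a"
    unfolding e_def a_def power2_eq_square exp_add[symmetric] by (simp add: exp_minus field_simps)
  have e0: "e > 0" by (simp add: e_def)
  have combo: "has_bochner_integral lborel (\<lambda>y. kcomb_eval \<sigma> g y * ou_density \<alpha> t x y)
      (lin g (\<lambda>p. A * gs s (p - a * x)))" for g x
  proof -
    have "has_bochner_integral lborel (\<lambda>y. lin g (\<lambda>p. sqrt (c / pi) * (gs (\<sigma>^2) (y - p) * gs (1 / c) (y - a * x))))
        (lin g (\<lambda>p. sqrt (c / pi) * (sqrt (pi * \<sigma>^2 * (1 / c) / (\<sigma>^2 + 1 / c)) * gs (\<sigma>^2 + 1 / c) (p - a * x))))"
      by (intro lin_hbi has_bochner_integral_mult_right gauss_prod_hbi) (use sg c0 in auto)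
    moreover have "(\<lambda>y. lin g (\<lambda>p. sqrt (c / pi) * (gs (\<sigma>^2) (y - p) * gs (1 / c) (y - a * x))))
        = (\<lambda>y. kcomb_eval \<sigma> g y * ou_density \<alpha> t x y)"
      unfolding kcomb_eval_lin dens gauss_kernel_gs
      by (simp add: lin_cmult[symmetric] gs_sym[of "\<sigma>^2"] mult.commute mult.left_commute)
    moreover have "lin g (\<lambda>p. sqrt (c / pi) * (sqrt (pi * \<sigma>^2 * (1 / c) / (\<sigma>^2 + 1 / c)) * gs (\<sigma>^2 + 1 / c) (p - a * x)))
        = lin g (\<lambda>p. A * gs s (p - a * x))"
      unfolding A_def s_def by (simp add: mult.assoc)
    ultimately show ?thesis by simp
  qed
  have Bt: "\<bar>lin d (\<lambda>x. lin g (\<lambda>p. A * gs s (p - a * x)))\<bar> \<le> e * Nm \<sigma> g * Nm \<sigma> d" for g d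
  proof -
    define T where "T = lin g (\<lambda>p. lin d (\<lambda>x. gs s (p - a * x)))"
    have eqT: "lin d (\<lambda>x. lin g (\<lambda>p. A * gs s (p - a * x))) = A * T"
      unfolding T_def by (subst lin_swap) (simp add: lin_cmult)
    have v3: "s - \<sigma>^2/2 - a^2 * \<sigma>^2/2 > 0"
    proof -
      have "a^2 < 1" using a0 a1 by (simp add: power_less_one_iff)
      then have "\<sigma>^2 * a^2 \<le> \<sigma>^2" using sg by (simp add: mult_left_le)
      then have le: "a^2 * \<sigma>^2 \<le> \<sigma>^2" by (simp add: mult.commute)
      have p: "1 / c > 0" using c0 by simp
      show ?thesis unfolding s_def using le p by linarith
    qed
    have "T^2 * (\<sigma>^2 / s) \<le> Bf \<sigma> g g * Bf \<sigma> d d / a"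
      unfolding T_def by (rule key_sq[OF sg a0 v3])
    then have "(A * T)^2 \<le> (e * Nm \<sigma> g * Nm \<sigma> d)^2"
      unfolding power_mult_distrib A2 e2 Nm_sq[OF sg] by (simp add: mult.commute)
    then have "\<bar>A * T\<bar> \<le> e * Nm \<sigma> g * Nm \<sigma> d"
      using e0 Nm_nonneg[OF sg] by (metis abs_le_square_iff abs_of_nonneg mult_nonneg_nonneg less_imp_le)
    then show ?thesis unfolding eqT .
  qed
  have kmeas: "kcomb_eval \<sigma> g \<in> borel_measurable lborel" for g
  proof -
    have "(\<lambda>y. lin g (\<lambda>p. gauss_kernel \<sigma> p y)) \<in> borel_measurable lborel"
    proof (rule lin_measurable)
      fix p
      have "integrable lborel (\<lambda>y. gs (\<sigma>^2) (y - p))" using gs_hbi1[of "\<sigma>^2" p] sg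
        by (auto intro: integrable.intros)
      then show "(\<lambda>y. gauss_kernel \<sigma> p y) \<in> borel_measurable lborel"
        unfolding gauss_kernel_gs by (subst gs_sym) (rule borel_measurable_integrable)
    qed
    then show ?thesis by (simp add: kcomb_eval_lin[abs_def])
  qed
  have dint: "integrable lborel (\<lambda>y. ou_density \<alpha> t x y)" for x
  proof -
    have "has_bochner_integral lborel (\<lambda>y. sqrt (c / pi) * gs (1 / c) (y - a * x)) (sqrt (c / pi) * sqrt (pi * (1 / c)))"
      by (intro has_bochner_integral_mult_right gs_hbi1) (use c0 in simp)
    then have "integrable lborel (\<lambda>y. sqrt (c / pi) * gs (1 / c) (y - a * x))" by (rule integrable.intros)
    then show ?thesis by (simp only: dens)
  qed
  have dnn: "ou_density \<alpha> t x y \<ge> 0" for x y using c0 by (simp add: dens gs_def)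
  have H: "\<forall>d. \<bar>lin d (koopman \<alpha> t f)\<bar> \<le> e * L * Nm \<sigma> d"
    if g: "rkhs_approx \<sigma> f g" and L: "(\<lambda>n. Nm \<sigma> (g n)) \<longlonglongrightarrow> L" for g L
  proof
    fix d
    have pw: "(\<lambda>n. kcomb_eval \<sigma> (g n) y) \<longlonglongrightarrow> f y" for y using g by (simp add: rkhs_approx_def)
    have fmeas: "f \<in> borel_measurable lborel"
      by (rule borel_measurable_LIMSEQ_real[OF pw kmeas])
    obtain Bd where Bd: "\<And>n. Nm \<sigma> (g n) \<le> Bd"
      using convergent_imp_Bseq[OF approx_conv[OF sg g]] by (auto elim!: BseqE) (meson abs_le_D1)
    have conv: "(\<lambda>n. integral\<^sup>L lborel (\<lambda>y. kcomb_eval \<sigma> (g n) y * ou_density \<alpha> t x y))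
        \<longlonglongrightarrow> integral\<^sup>L lborel (\<lambda>y. f y * ou_density \<alpha> t x y)" for x
    proof (rule integral_dominated_convergence[where w = "\<lambda>y. Bd * ou_density \<alpha> t x y"])
      show "(\<lambda>y. f y * ou_density \<alpha> t x y) \<in> borel_measurable lborel"
        using fmeas borel_measurable_integrable[OF dint[of x]] by measurable
      show "(\<lambda>y. kcomb_eval \<sigma> (g n) y * ou_density \<alpha> t x y) \<in> borel_measurable lborel" for n
        using kmeas[of "g n"] borel_measurable_integrable[OF dint[of x]] by measurable
      show "integrable lborel (\<lambda>y. Bd * ou_density \<alpha> t x y)" using dint[of x] by simp
      show "AE y in lborel. (\<lambda>n. kcomb_eval \<sigma> (g n) y * ou_density \<alpha> t x y) \<longlonglongrightarrow> f y * ou_density \<alpha> t x y"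
        using pw by (auto intro!: tendsto_mult_right)
      show "AE y in lborel. norm (kcomb_eval \<sigma> (g n) y * ou_density \<alpha> t x y) \<le> Bd * ou_density \<alpha> t x y" for n
      proof (rule AE_I2)
        fix y
        have "\<bar>kcomb_eval \<sigma> (g n) y\<bar> \<le> Bd" using eval_bound[OF sg] Bd by (meson order_trans)
        then show "norm (kcomb_eval \<sigma> (g n) y * ou_density \<alpha> t x y) \<le> Bd * ou_density \<alpha> t x y"
          using dnn[of x y] by (simp add: abs_mult mult_right_mono)
      qed
    qed
    have K: "koopman \<alpha> t f = (\<lambda>x. integral\<^sup>L lborel (\<lambda>y. f y * ou_density \<alpha> t x y))"
      using t by (simp add: koopman_def)
    have lim1: "(\<lambda>n. lin d (\<lambda>x. lin (g n) (\<lambda>p. A * gs s (p - a * x)))) \<longlonglongrightarrow> lin d (koopman \<alpha> t f)"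
    proof -
      have "(\<lambda>n. lin d (\<lambda>x. integral\<^sup>L lborel (\<lambda>y. kcomb_eval \<sigma> (g n) y * ou_density \<alpha> t x y)))
          \<longlonglongrightarrow> lin d (koopman \<alpha> t f)"
        unfolding K by (rule lin_tendsto[OF conv])
      moreover have "integral\<^sup>L lborel (\<lambda>y. kcomb_eval \<sigma> (g n) y * ou_density \<alpha> t x y)
          = lin (g n) (\<lambda>p. A * gs s (p - a * x))" for n x
        by (rule has_bochner_integral_integral_eq[OF combo])
      ultimately show ?thesis by simp
    qed
    have lim2: "(\<lambda>n. e * Nm \<sigma> (g n) * Nm \<sigma> d) \<longlonglongrightarrow> e * L * Nm \<sigma> d"
      by (intro tendsto_mult tendsto_const L)
    show "\<bar>lin d (koopman \<alpha> t f)\<bar> \<le> e * L * Nm \<sigma> d"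
      by (rule LIMSEQ_le[OF tendsto_rabs[OF lim1] lim2]) (use Bt in auto)
  qed
  show ?thesis
    using transfer[OF sg e0 f, of "koopman \<alpha> t f"] H unfolding e_def by blast
qed

theorem propositionE2:
  fixes \<alpha> \<sigma> t :: real
  assumes "\<alpha> > 0" and "\<sigma> > 0" and "t \<ge> 0"
  shows "\<forall>f\<in>gauss_rkhs \<sigma>. koopman \<alpha> t f \<in> gauss_rkhs \<sigma> \<and>
           gauss_rkhs_norm \<sigma> (koopman \<alpha> t f) \<le> exp (\<alpha> / 2 * t) * gauss_rkhs_norm \<sigma> f"
proof
  fix f assume f: "f \<in> gauss_rkhs \<sigma>"
  show "koopman \<alpha> t f \<in> gauss_rkhs \<sigma> \<and>
           gauss_rkhs_norm \<sigma> (koopman \<alpha> t f) \<le> exp (\<alpha> / 2 * t) * gauss_rkhs_norm \<sigma> f"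
  proof (cases "t = 0")
    case True
    then show ?thesis using f by (simp add: koopman_def)
  next
    case False
    then have "t > 0" using assms(3) by simp
    then show ?thesis by (rule main_pos[OF assms(1,2) _ f])
  qed
qed

end
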